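(* For every positive integer $n$, the fan $F_{3n}$ has a vertex-minor isomorphic to a cycle of length $2n+1$.
   Context: Graphs are finite, simple, undirected. The fan $F_m$ is the graph on $m$ vertices with a vertex $c$ (the center) such that $F_m\setminus c$ is a path on $m-1$ vertices and $c$ is adjacent to all other vertices. Local complementation $G*v$ complements the subgraph induced on the neighborhood of $v$; a vertex-minor of $G$ is an induced subgraph of a graph obtained from $G$ by a sequence of local complementations. *)

theory Defs
  imports Main
begin

type_synonym 'a graph = "'a set \<times> 'a set set"

definition verts :: "'a graph \<Rightarrow> 'a set" where "verts G = fst G"
definition edges :: "'a graph \<Rightarrow> 'a set set" where "edges G = snd G"

definition simple_graph :: "'a graph \<Rightarrow> bool" where
  "simple_graph G \<longleftrightarrow> finite (verts G) \<and>
     (\<forall>e\<in>edges G. e \<subseteq> verts G \<and> card e = 2)"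

definition nbhd :: "'a graph \<Rightarrow> 'a \<Rightarrow> 'a set" where
  "nbhd G v = {u \<in> verts G. {u, v} \<in> edges G}"

definition local_comp :: "'a graph \<Rightarrow> 'a \<Rightarrow> 'a graph" where
  "local_comp G v =
     (verts G,
      (edges G - {{x, y} | x y. x \<in> nbhd G v \<and> y \<in> nbhd G v \<and> x \<noteq> y})
      \<union> ({{x, y} | x y. x \<in> nbhd G v \<and> y \<in> nbhd G v \<and> x \<noteq> y} - edges G))"

inductive lc_equiv :: "'a graph \<Rightarrow> 'a graph \<Rightarrow> bool" where
  refl: "lc_equiv G G"
| step: "lc_equiv G H \<Longrightarrow> v \<in> verts H \<Longrightarrow> lc_equiv G (local_comp H v)"

definition induced_subgraph :: "'a graph \<Rightarrow> 'a set \<Rightarrow> 'a graph" where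
  "induced_subgraph G S = (S, {e \<in> edges G. e \<subseteq> S})"

definition vertex_minor :: "'a graph \<Rightarrow> 'a graph \<Rightarrow> bool" where
  "vertex_minor H G \<longleftrightarrow>
     (\<exists>G' S. lc_equiv G G' \<and> S \<subseteq> verts G' \<and> H = induced_subgraph G' S)"

definition graph_iso :: "'a graph \<Rightarrow> 'b graph \<Rightarrow> bool" where
  "graph_iso G H \<longleftrightarrow> (\<exists>f. bij_betw f (verts G) (verts H) \<and>
     (\<forall>x\<in>verts G. \<forall>y\<in>verts G. {x, y} \<in> edges G \<longleftrightarrow> {f x, f y} \<in> edges H))"

definition fan :: "nat \<Rightarrow> nat graph" where
  "fan m = ({0..<m},
     {{0, i} | i. 1 \<le> i \<and> i < m} \<union> {{i, i + 1} | i. 1 \<le> i \<and> i + 1 < m})"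

text \<open>Cycle C_k on vertices 0..k-1 (meaningful for k \<ge> 3).\<close>
definition cycle_graph :: "nat \<Rightarrow> nat graph" where
  "cycle_graph k = ({0..<k}, {{i, (i + 1) mod k} | i. i < k})"

end

theory Submission
  imports Defs
begin

lemma dset: "{a,b} \<in> {{x, y} | x y. x \<in> N \<and> y \<in> N \<and> x \<noteq> y} \<longleftrightarrow> a \<in> N \<and> b \<in> N \<and> a \<noteq> b"
  by (auto simp: doubleton_eq_iff)

lemma adj_lc: "{a,b} \<in> edges (local_comp G v) \<longleftrightarrow>
   (({a,b} \<in> edges G) \<noteq> (a \<in> nbhd G v \<and> b \<in> nbhd G v \<and> a \<noteq> b))"
  unfolding local_comp_def edges_def using dset[of a b "nbhd G v"] by auto

lemma verts_lc: "verts (local_comp G v) = verts G"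
  by (simp add: local_comp_def verts_def)

definition fanadj :: "nat \<Rightarrow> nat \<Rightarrow> nat \<Rightarrow> bool" where
 "fanadj m a b = ((a=0 \<and> 1\<le>b \<and> b<m) \<or> (b=0 \<and> 1\<le>a \<and> a<m) \<or> (1\<le>a \<and> b=a+1 \<and> b<m) \<or> (1\<le>b \<and> a=b+1 \<and> a<m))"

lemma fan_adj: "{a,b} \<in> edges (fan m) \<longleftrightarrow> fanadj m a b"
  unfolding fan_def edges_def fanadj_def by (auto simp: doubleton_eq_iff)

definition P :: "nat \<Rightarrow> nat \<Rightarrow> nat \<Rightarrow> nat \<Rightarrow> bool" where
 "P m k a b = ((fanadj m a b \<and> \<not> ((a=0 \<and> b mod 3 \<noteq> 0 \<and> 2\<le>b \<and> b\<le>3*k+1) \<or> (b=0 \<and> a mod 3\<noteq>0 \<and> 2\<le>a \<and> a\<le>3*k+1)))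
    \<or> (a mod 3 = 2 \<and> b = a+2 \<and> b \<le> 3*k+1) \<or> (b mod 3 = 2 \<and> a = b+2 \<and> a \<le> 3*k+1))"

fun Gs :: "nat \<Rightarrow> nat \<Rightarrow> nat graph" where
  "Gs m 0 = fan m"
| "Gs m (Suc k) = local_comp (Gs m k) (3*(k+1))"

lemma verts_Gs: "verts (Gs m k) = {0..<m}"
  by (induction k) (simp_all add: verts_lc, simp add: fan_def verts_def)

lemma lc_Gs: "lc_equiv (fan m) (Gs m k) \<or> \<not> (3*k < m)"
proof (induction k)
  case 0 then show ?case by (simp add: lc_equiv.refl)
next
  case (Suc k)
  then show ?case using lc_equiv.step[of "fan m" "Gs m k" "3*(k+1)"] by (auto simp: verts_Gs)
qed

lemma nb: "3*k+4 < m \<Longrightarrow> {u. u < m \<and> P m k u (3*k+3)} = {0, 3*k+2, 3*k+4}"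
  unfolding P_def fanadj_def by (auto; presburger)

lemma adj_Gs: "3*k+1 < m \<Longrightarrow> {a,b} \<in> edges (Gs m k) \<longleftrightarrow> P m k a b"
proof (induction k arbitrary: a b)
  case 0
  then show ?case by (auto simp: fan_adj P_def)
next
  case (Suc k)
  have m: "3*k+4 < m" using Suc.prems by simp
  have e: "3*(k+1) = 3*k+3" by simp
  have N: "nbhd (Gs m k) (3*(k+1)) = {0, 3*k+2, 3*k+4}"
    using nb[OF m] Suc.IH m unfolding nbhd_def verts_Gs e by auto
  have "{a,b} \<in> edges (Gs m (Suc k)) \<longleftrightarrow> (P m k a b \<noteq> (a \<in> {0, 3*k+2, 3*k+4} \<and> b \<in> {0, 3*k+2, 3*k+4} \<and> a \<noteq> b))"
    using adj_lc[of a b "Gs m k" "3*(k+1)", unfolded N] Suc.IH m by simp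
  also have "\<dots> \<longleftrightarrow> P m (Suc k) a b"
  proof (cases "a \<in> {0, 3*k+2, 3*k+4} \<and> b \<in> {0, 3*k+2, 3*k+4} \<and> a \<noteq> b")
    case True
    have "(3*k+2) mod 3 = (2::nat)" "(3*k+4) mod 3 = (1::nat)" by presburger+
    note mods = this
    from True have "(a=0 \<and> b=3*k+2) \<or> (a=0 \<and> b=3*k+4) \<or> (a=3*k+2 \<and> b=0) \<or> (a=3*k+4 \<and> b=0) \<or> (a=3*k+2 \<and> b=3*k+4) \<or> (a=3*k+4 \<and> b=3*k+2)" by auto
    then show ?thesis using True m mods by (elim disjE conjE; simp add: P_def fanadj_def)
  next
    case False
    have r: "\<And>b. (b mod 3 \<noteq> 0 \<and> 2\<le>b \<and> b \<le> 3*(Suc k)+1) \<longleftrightarrow> (b mod 3 \<noteq> 0 \<and> 2\<le>b \<and> b\<le>3*k+1) \<or> b=3*k+2 \<or> b=3*k+4"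
      by presburger
    have q: "\<And>a b. (a mod 3 = 2 \<and> b=a+2 \<and> b \<le> 3*(Suc k)+1) \<longleftrightarrow> (a mod 3=2 \<and> b=a+2 \<and> b\<le>3*k+1) \<or> (a=3*k+2 \<and> b=3*k+4)"
      by presburger
    have "P m (Suc k) a b = P m k a b"
      using False unfolding P_def r q by auto
    then show ?thesis using False by simp
  qed
  finally show ?case .
qed


lemma m1: "(3*q+1::nat) mod 3 = 1" "(3*q+2::nat) mod 3 = 2" "(3*q::nat) mod 3 = 0"
  "(3*q+1::nat) div 3 = q" "(3*q+2::nat) div 3 = q" by arith+
lemma Sform: "(x::nat) = 0 \<or> x mod 3 \<noteq> 0 \<Longrightarrow> x = 0 \<or> (\<exists>q. x = 3*q+1) \<or> (\<exists>q. x=3*q+2)"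
  by arith
definition cyc :: "nat \<Rightarrow> nat \<Rightarrow> nat \<Rightarrow> bool" where
 "cyc K c d = ((c<K \<and> d=(c+1) mod K) \<or> (d<K \<and> c=(d+1) mod K))"
lemma modK: "(c::nat) < K \<Longrightarrow> (c+1) mod K = (if c+1 = K then 0 else c+1)"
  by (auto simp: mod_if)

lemma cyc_iff: "c < K \<Longrightarrow> d < K \<Longrightarrow> cyc K c d \<longleftrightarrow> d=c+1 \<or> c=d+1 \<or> (c+1=K \<and> d=0) \<or> (d+1=K \<and> c=0)"
  unfolding cyc_def using modK[of c K] modK[of d K] by auto
lemma m2: "Suc (3*q) mod 3 = 1" "Suc (Suc (3*q)) mod 3 = 2" "Suc (3*q) div 3 = q" "Suc (Suc (3*q)) div 3 = q"
  "3*q \<noteq> Suc (3*r)" "3*q \<noteq> Suc (Suc (3*r))" "Suc (3*q) \<noteq> Suc (Suc (3*r))"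
  "Suc (3*r) \<noteq> 3*q" "Suc (Suc (3*r)) \<noteq> 3*q" "Suc (Suc (3*r)) \<noteq> Suc (3*q)"
  by arith+
lemma gv: "(3*q+1::nat) - (3*q+1) div 3 = 2*q+1" "(3*q+2::nat) - (3*q+2) div 3 = 2*q+2" "(0::nat) - 0 div 3 = 0"
  by arith+
lemma cc00:
  assumes "x = 0" "y = 0" "x < 3*Suc k" "y < 3*Suc k"
  shows "P (3*Suc k) k x y \<longleftrightarrow> cyc (2*Suc k+1) (x - x div 3) (y - y div 3)"
proof -
  have e: "x - x div 3 = 0" "y - y div 3 = 0" using assms(1,2) gv by simp_all
  have "P (3*Suc k) k (0) (0) \<longleftrightarrow> cyc (2*Suc k+1) (0) (0)"
    using assms(3,4) unfolding assms(1,2)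
    by (subst cyc_iff; (simp add: P_def fanadj_def m1 m2)?; presburger?)
  then show ?thesis unfolding e unfolding assms(1,2) .
qed
lemma cc01:
  assumes "x = 0" "y = 3*r+1" "x < 3*Suc k" "y < 3*Suc k"
  shows "P (3*Suc k) k x y \<longleftrightarrow> cyc (2*Suc k+1) (x - x div 3) (y - y div 3)"
proof -
  have e: "x - x div 3 = 0" "y - y div 3 = 2*r+1" using assms(1,2) gv by simp_all
  have "P (3*Suc k) k (0) (3*r+1) \<longleftrightarrow> cyc (2*Suc k+1) (0) (2*r+1)"
    using assms(3,4) unfolding assms(1,2)
    by (subst cyc_iff; (simp add: P_def fanadj_def m1 m2)?; presburger?)
  then show ?thesis unfolding e unfolding assms(1,2) .
qed
lemma cc02:
  assumes "x = 0" "y = 3*r+2" "x < 3*Suc k" "y < 3*Suc k"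
  shows "P (3*Suc k) k x y \<longleftrightarrow> cyc (2*Suc k+1) (x - x div 3) (y - y div 3)"
proof -
  have e: "x - x div 3 = 0" "y - y div 3 = 2*r+2" using assms(1,2) gv by simp_all
  have "P (3*Suc k) k (0) (3*r+2) \<longleftrightarrow> cyc (2*Suc k+1) (0) (2*r+2)"
    using assms(3,4) unfolding assms(1,2)
    by (subst cyc_iff; (simp add: P_def fanadj_def m1 m2)?; presburger?)
  then show ?thesis unfolding e unfolding assms(1,2) .
qed
lemma cc10:
  assumes "x = 3*q+1" "y = 0" "x < 3*Suc k" "y < 3*Suc k"
  shows "P (3*Suc k) k x y \<longleftrightarrow> cyc (2*Suc k+1) (x - x div 3) (y - y div 3)"
proof -
  have e: "x - x div 3 = 2*q+1" "y - y div 3 = 0" using assms(1,2) gv by simp_all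
  have "P (3*Suc k) k (3*q+1) (0) \<longleftrightarrow> cyc (2*Suc k+1) (2*q+1) (0)"
    using assms(3,4) unfolding assms(1,2)
    by (subst cyc_iff; (simp add: P_def fanadj_def m1 m2)?; presburger?)
  then show ?thesis unfolding e unfolding assms(1,2) .
qed
lemma cc11:
  assumes "x = 3*q+1" "y = 3*r+1" "x < 3*Suc k" "y < 3*Suc k"
  shows "P (3*Suc k) k x y \<longleftrightarrow> cyc (2*Suc k+1) (x - x div 3) (y - y div 3)"
proof -
  have e: "x - x div 3 = 2*q+1" "y - y div 3 = 2*r+1" using assms(1,2) gv by simp_all
  have "P (3*Suc k) k (3*q+1) (3*r+1) \<longleftrightarrow> cyc (2*Suc k+1) (2*q+1) (2*r+1)"
    using assms(3,4) unfolding assms(1,2)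
    by (subst cyc_iff; (simp add: P_def fanadj_def m1 m2)?; presburger?)
  then show ?thesis unfolding e unfolding assms(1,2) .
qed
lemma cc12:
  assumes "x = 3*q+1" "y = 3*r+2" "x < 3*Suc k" "y < 3*Suc k"
  shows "P (3*Suc k) k x y \<longleftrightarrow> cyc (2*Suc k+1) (x - x div 3) (y - y div 3)"
proof -
  have e: "x - x div 3 = 2*q+1" "y - y div 3 = 2*r+2" using assms(1,2) gv by simp_all
  have "P (3*Suc k) k (3*q+1) (3*r+2) \<longleftrightarrow> cyc (2*Suc k+1) (2*q+1) (2*r+2)"
    using assms(3,4) unfolding assms(1,2)
    by (subst cyc_iff; (simp add: P_def fanadj_def m1 m2)?; presburger?)
  then show ?thesis unfolding e unfolding assms(1,2) .
qed
lemma cc20: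
  assumes "x = 3*q+2" "y = 0" "x < 3*Suc k" "y < 3*Suc k"
  shows "P (3*Suc k) k x y \<longleftrightarrow> cyc (2*Suc k+1) (x - x div 3) (y - y div 3)"
proof -
  have e: "x - x div 3 = 2*q+2" "y - y div 3 = 0" using assms(1,2) gv by simp_all
  have "P (3*Suc k) k (3*q+2) (0) \<longleftrightarrow> cyc (2*Suc k+1) (2*q+2) (0)"
    using assms(3,4) unfolding assms(1,2)
    by (subst cyc_iff; (simp add: P_def fanadj_def m1 m2)?; presburger?)
  then show ?thesis unfolding e unfolding assms(1,2) .
qed
lemma cc21:
  assumes "x = 3*q+2" "y = 3*r+1" "x < 3*Suc k" "y < 3*Suc k"
  shows "P (3*Suc k) k x y \<longleftrightarrow> cyc (2*Suc k+1) (x - x div 3) (y - y div 3)"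
proof -
  have e: "x - x div 3 = 2*q+2" "y - y div 3 = 2*r+1" using assms(1,2) gv by simp_all
  have "P (3*Suc k) k (3*q+2) (3*r+1) \<longleftrightarrow> cyc (2*Suc k+1) (2*q+2) (2*r+1)"
    using assms(3,4) unfolding assms(1,2)
    by (subst cyc_iff; (simp add: P_def fanadj_def m1 m2)?; presburger?)
  then show ?thesis unfolding e unfolding assms(1,2) .
qed
lemma cc22:
  assumes "x = 3*q+2" "y = 3*r+2" "x < 3*Suc k" "y < 3*Suc k"
  shows "P (3*Suc k) k x y \<longleftrightarrow> cyc (2*Suc k+1) (x - x div 3) (y - y div 3)"
proof -
  have e: "x - x div 3 = 2*q+2" "y - y div 3 = 2*r+2" using assms(1,2) gv by simp_all
  have "P (3*Suc k) k (3*q+2) (3*r+2) \<longleftrightarrow> cyc (2*Suc k+1) (2*q+2) (2*r+2)"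
    using assms(3,4) unfolding assms(1,2)
    by (subst cyc_iff; (simp add: P_def fanadj_def m1 m2)?; presburger?)
  then show ?thesis unfolding e unfolding assms(1,2) .
qed
lemma key:
  assumes x: "x < 3*Suc k" "x = 0 \<or> x mod 3 \<noteq> 0" and y: "y < 3*Suc k" "y = 0 \<or> y mod 3 \<noteq> 0"
  shows "P (3*Suc k) k x y \<longleftrightarrow> cyc (2*Suc k+1) (x - x div 3) (y - y div 3)"
  using Sform[OF x(2)] Sform[OF y(2)] x(1) y(1)
  apply (elim disjE exE)
  apply ((rule cc00, assumption, assumption, assumption, assumption) | (rule cc01, assumption, assumption, assumption, assumption) | (rule cc02, assumption, assumption, assumption, assumption) | (rule cc10, assumption, assumption, assumption, assumption) | (rule cc11, assumption, assumption, assumption, assumption) | (rule cc12, assumption, assumption, assumption, assumption) | (rule cc20, assumption, assumption, assumption, assumption) | (rule cc21, assumption, assumption, assumption, assumption) | (rule cc22, assumption, assumption, assumption, assumption))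
  apply ((rule cc00, assumption, assumption, assumption, assumption) | (rule cc01, assumption, assumption, assumption, assumption) | (rule cc02, assumption, assumption, assumption, assumption) | (rule cc10, assumption, assumption, assumption, assumption) | (rule cc11, assumption, assumption, assumption, assumption) | (rule cc12, assumption, assumption, assumption, assumption) | (rule cc20, assumption, assumption, assumption, assumption) | (rule cc21, assumption, assumption, assumption, assumption) | (rule cc22, assumption, assumption, assumption, assumption))
  apply ((rule cc00, assumption, assumption, assumption, assumption) | (rule cc01, assumption, assumption, assumption, assumption) | (rule cc02, assumption, assumption, assumption, assumption) | (rule cc10, assumption, assumption, assumption, assumption) | (rule cc11, assumption, assumption, assumption, assumption) | (rule cc12, assumption, assumption, assumption, assumption) | (rule cc20, assumption, assumption, assumption, assumption) | (rule cc21, assumption, assumption, assumption, assumption) | (rule cc22, assumption, assumption, assumption, assumption))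
  apply ((rule cc00, assumption, assumption, assumption, assumption) | (rule cc01, assumption, assumption, assumption, assumption) | (rule cc02, assumption, assumption, assumption, assumption) | (rule cc10, assumption, assumption, assumption, assumption) | (rule cc11, assumption, assumption, assumption, assumption) | (rule cc12, assumption, assumption, assumption, assumption) | (rule cc20, assumption, assumption, assumption, assumption) | (rule cc21, assumption, assumption, assumption, assumption) | (rule cc22, assumption, assumption, assumption, assumption))
  apply ((rule cc00, assumption, assumption, assumption, assumption) | (rule cc01, assumption, assumption, assumption, assumption) | (rule cc02, assumption, assumption, assumption, assumption) | (rule cc10, assumption, assumption, assumption, assumption) | (rule cc11, assumption, assumption, assumption, assumption) | (rule cc12, assumption, assumption, assumption, assumption) | (rule cc20, assumption, assumption, assumption, assumption) | (rule cc21, assumption, assumption, assumption, assumption) | (rule cc22, assumption, assumption, assumption, assumption))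
  apply ((rule cc00, assumption, assumption, assumption, assumption) | (rule cc01, assumption, assumption, assumption, assumption) | (rule cc02, assumption, assumption, assumption, assumption) | (rule cc10, assumption, assumption, assumption, assumption) | (rule cc11, assumption, assumption, assumption, assumption) | (rule cc12, assumption, assumption, assumption, assumption) | (rule cc20, assumption, assumption, assumption, assumption) | (rule cc21, assumption, assumption, assumption, assumption) | (rule cc22, assumption, assumption, assumption, assumption))
  apply ((rule cc00, assumption, assumption, assumption, assumption) | (rule cc01, assumption, assumption, assumption, assumption) | (rule cc02, assumption, assumption, assumption, assumption) | (rule cc10, assumption, assumption, assumption, assumption) | (rule cc11, assumption, assumption, assumption, assumption) | (rule cc12, assumption, assumption, assumption, assumption) | (rule cc20, assumption, assumption, assumption, assumption) | (rule cc21, assumption, assumption, assumption, assumption) | (rule cc22, assumption, assumption, assumption, assumption))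
  apply ((rule cc00, assumption, assumption, assumption, assumption) | (rule cc01, assumption, assumption, assumption, assumption) | (rule cc02, assumption, assumption, assumption, assumption) | (rule cc10, assumption, assumption, assumption, assumption) | (rule cc11, assumption, assumption, assumption, assumption) | (rule cc12, assumption, assumption, assumption, assumption) | (rule cc20, assumption, assumption, assumption, assumption) | (rule cc21, assumption, assumption, assumption, assumption) | (rule cc22, assumption, assumption, assumption, assumption))
  apply ((rule cc00, assumption, assumption, assumption, assumption) | (rule cc01, assumption, assumption, assumption, assumption) | (rule cc02, assumption, assumption, assumption, assumption) | (rule cc10, assumption, assumption, assumption, assumption) | (rule cc11, assumption, assumption, assumption, assumption) | (rule cc12, assumption, assumption, assumption, assumption) | (rule cc20, assumption, assumption, assumption, assumption) | (rule cc21, assumption, assumption, assumption, assumption) | (rule cc22, assumption, assumption, assumption, assumption))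
  done

lemma f1: "(2*p+1::nat) + (2*p+1-1) div 2 = 3*p+1" "(2*p+2::nat) + (2*p+2-1) div 2 = 3*p+2" by arith+
lemma Tform: "(i::nat) = 0 \<or> (\<exists>p. i = 2*p+1) \<or> (\<exists>p. i=2*p+2)"
  by arith

lemma gS: assumes "x = 0 \<or> x mod 3 \<noteq> 0" "x < 3*Suc k"
  shows "(x - x div 3) + (x - x div 3 - 1) div 2 = x \<and> x - x div 3 < 2*Suc k + 1"
  using Sform[OF assms(1)]
proof (elim disjE exE)
  assume "x = 0" then show ?thesis by simp
next
  fix q assume q: "x = 3*q+1"
  have e: "x - x div 3 = 2*q+1" using q gv by simp
  show ?thesis unfolding e using f1(1)[of q] q assms(2) by linarith
next
  fix q assume q: "x = 3*q+2"
  have e: "x - x div 3 = 2*q+2" using q gv by simp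
  show ?thesis unfolding e using f1(2)[of q] q assms(2) by linarith
qed

lemma gT: assumes "(i::nat) < 2*Suc k + 1"
  shows "(i + (i-1) div 2) - (i + (i-1) div 2) div 3 = i \<and> i + (i-1) div 2 < 3*Suc k
     \<and> (i + (i-1) div 2 = 0 \<or> (i + (i-1) div 2) mod 3 \<noteq> 0)"
  using Tform[of i]
proof (elim disjE exE)
  assume "i = 0" then show ?thesis by simp
next
  fix p assume p: "i = 2*p+1"
  have e: "i + (i-1) div 2 = 3*p+1" using p f1 by simp
  show ?thesis unfolding e using gv(1)[of p] m1(1)[of p] p assms by linarith
next
  fix p assume p: "i = 2*p+2"
  have e: "i + (i-1) div 2 = 3*p+2" using p f1 by simp
  show ?thesis unfolding e using gv(2)[of p] m1(2)[of p] p assms by linarith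
qed

lemma cyc_adj: "{c,d} \<in> edges (cycle_graph K) \<longleftrightarrow> cyc K c d"
  unfolding cycle_graph_def edges_def cyc_def by (auto simp: doubleton_eq_iff)

theorem lemma4p2:
  fixes n :: nat
  assumes "n \<ge> 1"
  shows "\<exists>H. vertex_minor H (fan (3 * n)) \<and> graph_iso H (cycle_graph (2 * n + 1))"
proof -
  obtain k where n: "n = Suc k" using assms by (cases n) auto
  define S where "S = {x. x < 3*Suc k \<and> (x = 0 \<or> x mod 3 \<noteq> 0)}"
  define G' where "G' = Gs (3*Suc k) k"
  define H where "H = induced_subgraph G' S"
  have lc: "lc_equiv (fan (3*Suc k)) G'" using lc_Gs[of "3*Suc k" k] unfolding G'_def by simp
  have SV: "S \<subseteq> verts G'" unfolding G'_def verts_Gs S_def by auto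
  have vm: "vertex_minor H (fan (3*Suc k))" unfolding vertex_minor_def H_def using lc SV by blast
  have vH: "verts H = S" unfolding H_def induced_subgraph_def verts_def by simp
  have vC: "verts (cycle_graph (2*Suc k+1)) = {0..<2*Suc k+1}" unfolding cycle_graph_def verts_def by simp
  have bij: "bij_betw (\<lambda>x::nat. x - x div 3) S {0..<2*Suc k+1}"
  proof (rule bij_betw_byWitness[where f'="\<lambda>i. i + (i-1) div 2"])
    show "\<forall>a\<in>S. a - a div 3 + (a - a div 3 - 1) div 2 = a"
    proof
      fix a assume "a \<in> S"
      then have "a = 0 \<or> a mod 3 \<noteq> 0" "a < 3*Suc k" unfolding S_def by simp_all
      from gS[OF this] show "a - a div 3 + (a - a div 3 - 1) div 2 = a" by (rule conjunct1)
    qed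
    show "\<forall>a'\<in>{0..<2 * Suc k + 1}. a' + (a' - 1) div 2 - (a' + (a' - 1) div 2) div 3 = a'"
    proof
      fix a assume "a \<in> {0..<2 * Suc k + 1}"
      then have "a < 2 * Suc k + 1" by simp
      from gT[OF this] show "a + (a - 1) div 2 - (a + (a - 1) div 2) div 3 = a" by (rule conjunct1)
    qed
    show "(\<lambda>x. x - x div 3) ` S \<subseteq> {0..<2 * Suc k + 1}"
    proof (rule image_subsetI)
      fix a assume "a \<in> S"
      then have "a = 0 \<or> a mod 3 \<noteq> 0" "a < 3*Suc k" unfolding S_def by simp_all
      from conjunct2[OF gS[OF this]] show "a - a div 3 \<in> {0..<2 * Suc k + 1}"
        by (simp only: atLeastLessThan_iff zero_le simp_thms)
    qed
    show "(\<lambda>i. i + (i - 1) div 2) ` {0..<2 * Suc k + 1} \<subseteq> S"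
    proof (rule image_subsetI)
      fix a assume "a \<in> {0..<2 * Suc k + 1}"
      then have "a < 2 * Suc k + 1" by simp
      from conjunct2[OF gT[OF this]] show "a + (a - 1) div 2 \<in> S"
        unfolding S_def mem_Collect_eq by blast
    qed
  qed
  have ed: "\<forall>x\<in>verts H. \<forall>y\<in>verts H. {x, y} \<in> edges H \<longleftrightarrow>
     {x - x div 3, y - y div 3} \<in> edges (cycle_graph (2*Suc k+1))"
  proof (intro ballI)
    fix x y assume x: "x \<in> verts H" and y: "y \<in> verts H"
    then have xs: "x \<in> S" and ys: "y \<in> S" using vH by auto
    have "{x, y} \<in> edges H \<longleftrightarrow> {x,y} \<in> edges G'"
      using xs ys unfolding H_def induced_subgraph_def edges_def by simp
    also have "\<dots> \<longleftrightarrow> P (3*Suc k) k x y" unfolding G'_def by (rule adj_Gs) simp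
    also have "\<dots> \<longleftrightarrow> cyc (2*Suc k+1) (x - x div 3) (y - y div 3)"
      using xs ys unfolding S_def by (intro key) auto
    also have "\<dots> \<longleftrightarrow> {x - x div 3, y - y div 3} \<in> edges (cycle_graph (2*Suc k+1))"
      by (rule cyc_adj[symmetric])
    finally show "{x, y} \<in> edges H \<longleftrightarrow> {x - x div 3, y - y div 3} \<in> edges (cycle_graph (2*Suc k+1))" .
  qed
  have "graph_iso H (cycle_graph (2*Suc k+1))"
  proof -
    have b: "bij_betw (\<lambda>x::nat. x - x div 3) (verts H) (verts (cycle_graph (2*Suc k+1)))"
      unfolding vH vC by (rule bij)
    show ?thesis unfolding graph_iso_def by (rule exI[where x="\<lambda>x::nat. x - x div 3"], rule conjI[OF b ed])
  qed
  then show ?thesis using vm unfolding n by blast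
qed

end
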